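(* For every integer $n\ge2$, $\gamma_{tr2}(P_2\square P_n)=\left\lceil\frac{3n}{2}\right\rceil$.
   Context: $P_m$ denotes the directed path with vertex set $\{0,1,\dots,m-1\}$ and arcs $(i,i+1)$ for $0\le i\le m-2$. The Cartesian product $D_1\square D_2$ has vertex set $V(D_1)\times V(D_2)$, with an arc from $(x_1,y_1)$ to $(x_2,y_2)$ iff either $(x_1,x_2)$ is an arc of $D_1$ and $y_1=y_2$, or $x_1=x_2$ and $(y_1,y_2)$ is an arc of $D_2$. For a digraph $D$ and positive integer $k$, a $k$-rainbow dominating function on $D$ is $f:V(D)\to\mathcal P(\{1,\dots,k\})$ such that every $v$ with $f(v)=\emptyset$ satisfies $\bigcup_{u\in N^-(v)}f(u)=\{1,\dots,k\}$, where $N^-(v)$ is the set of in-neighbors of $v$; its weight is $\sum_v|f(v)|$. It is total if additionally the subdigraph induced by $\{v:f(v)\ne\emptyset\}$ has no isolated vertex (a vertex with neither in- nor out-neighbors in it). $\gamma_{trk}(D)$ is the minimum weight of a total $k$-rainbow dominating function. *)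

theory Defs
  imports Complex_Main
begin

type_synonym 'a digraph = "'a set \<times> ('a \<times> 'a) set"

definition verts :: "'a digraph \<Rightarrow> 'a set" where "verts D = fst D"
definition arcs :: "'a digraph \<Rightarrow> ('a \<times> 'a) set" where "arcs D = snd D"

definition dpath :: "nat \<Rightarrow> nat digraph" where
  "dpath m = ({0..<m}, {(i, i + 1) | i. i + 1 < m})"

definition cart_prod :: "'a digraph \<Rightarrow> 'b digraph \<Rightarrow> ('a \<times> 'b) digraph" where
  "cart_prod D1 D2 = (verts D1 \<times> verts D2,
     {((x1, y1), (x2, y2)) | x1 y1 x2 y2.
        ((x1, x2) \<in> arcs D1 \<and> y1 = y2 \<and> y1 \<in> verts D2) \<or>
        (x1 = x2 \<and> x1 \<in> verts D1 \<and> (y1, y2) \<in> arcs D2)})"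

definition in_nbrs :: "'a digraph \<Rightarrow> 'a \<Rightarrow> 'a set" where
  "in_nbrs D v = {u \<in> verts D. (u, v) \<in> arcs D}"

definition rainbow_dom :: "nat \<Rightarrow> 'a digraph \<Rightarrow> ('a \<Rightarrow> nat set) \<Rightarrow> bool" where
  "rainbow_dom k D f \<longleftrightarrow>
     (\<forall>v \<in> verts D. f v \<subseteq> {1..k}) \<and>
     (\<forall>v \<in> verts D. f v = {} \<longrightarrow> (\<Union>u \<in> in_nbrs D v. f u) = {1..k})"

text \<open>Total: the subdigraph induced by the vertices with nonempty label has no isolated vertex.\<close>
definition total_rainbow_dom :: "nat \<Rightarrow> 'a digraph \<Rightarrow> ('a \<Rightarrow> nat set) \<Rightarrow> bool" where
  "total_rainbow_dom k D f \<longleftrightarrow> rainbow_dom k D f \<and>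
     (\<forall>v \<in> verts D. f v \<noteq> {} \<longrightarrow>
        (\<exists>u \<in> verts D. f u \<noteq> {} \<and> ((u, v) \<in> arcs D \<or> (v, u) \<in> arcs D)))"

definition rd_weight :: "'a digraph \<Rightarrow> ('a \<Rightarrow> nat set) \<Rightarrow> nat" where
  "rd_weight D f = (\<Sum>v \<in> verts D. card (f v))"

definition gamma_trk :: "nat \<Rightarrow> 'a digraph \<Rightarrow> nat" where
  "gamma_trk k D = (LEAST w. \<exists>f. total_rainbow_dom k D f \<and> rd_weight D f = w)"

end

theory Submission
  imports Defs
begin



definition phi :: "nat \<Rightarrow> nat \<Rightarrow> bool \<Rightarrow> bool \<Rightarrow> nat" where
 "phi a b na nb = (if a = 0 \<and> b = 0 then 2 else if a = 1 \<and> b = 1 then 1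
   else if a = 1 \<and> b = 2 then 3 else if a = 2 \<and> b = 0 then 1
   else if a = 2 \<and> b = 1 then 3 else if a = 2 \<and> b = 2 then 5
   else if a = 0 \<and> b = 1 then (if nb then 0 else 2)
   else if a = 0 \<and> b = 2 then (if nb then 2 else 4)
   else (if na then 1 else 0))"

lemma le2_cases: "(x::nat) \<le> 2 \<Longrightarrow> x = 0 \<or> x = 1 \<or> x = 2" by auto

lemma step:
  assumes "pa \<le> 2" "pb \<le> 2" "a \<le> 2" "b \<le> 2"
    "a = 0 \<Longrightarrow> pa = 2" "b = 0 \<Longrightarrow> a + pb \<ge> 2"
    "pna \<Longrightarrow> a > 0" "pnb \<Longrightarrow> b > 0"
  shows "3 + phi a b (a > 0 \<and> b = 0 \<and> pa = 0) (b > 0 \<and> a = 0 \<and> pb = 0) \<le> phi pa pb pna pnb + 2*(a+b)"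
  using le2_cases[OF assms(1)] le2_cases[OF assms(2)] le2_cases[OF assms(3)] le2_cases[OF assms(4)] assms(5-8)
  unfolding phi_def by (elim disjE; cases pna; cases pnb; simp)

lemma seq_lower:
  fixes a b :: "nat \<Rightarrow> nat" and n :: nat
  assumes n1: "n \<ge> 1"
    and bd: "\<And>y. y < n \<Longrightarrow> a y \<le> 2 \<and> b y \<le> 2"
    and a0: "a 0 > 0" and b0: "b 0 = 0 \<Longrightarrow> a 0 = 2"
    and sa: "\<And>y. 1 \<le> y \<Longrightarrow> y < n \<Longrightarrow> a y = 0 \<Longrightarrow> a (y-1) = 2"
    and sb: "\<And>y. 1 \<le> y \<Longrightarrow> y < n \<Longrightarrow> b y = 0 \<Longrightarrow> a y + b (y-1) \<ge> 2"
    and ta: "\<And>y. y < n \<Longrightarrow> a y > 0 \<Longrightarrow> b y = 0 \<Longrightarrow> (y = 0 \<or> a (y-1) = 0) \<Longrightarrow> y+1 < n \<and> a (y+1) > 0"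
    and tb: "\<And>y. y < n \<Longrightarrow> b y > 0 \<Longrightarrow> a y = 0 \<Longrightarrow> (y = 0 \<or> b (y-1) = 0) \<Longrightarrow> y+1 < n \<and> b (y+1) > 0"
  shows "3 * n \<le> 2 * (\<Sum>y<n. a y + b y)"
proof -
  define na where "na y = (a y > 0 \<and> b y = 0 \<and> (y = 0 \<or> a (y-1) = 0))" for y
  define nb where "nb y = (b y > 0 \<and> a y = 0 \<and> (y = 0 \<or> b (y-1) = 0))" for y
  have inv: "k < n \<Longrightarrow> 3 * Suc k + phi (a k) (b k) (na k) (nb k) \<le> 2 * (\<Sum>y<Suc k. a y + b y)" for k
  proof (induction k)
    case 0
    have "a 0 \<le> 2" "b 0 \<le> 2" using bd[of 0] 0 by auto
    then show ?case using a0 b0 le2_cases[of "a 0"] le2_cases[of "b 0"]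
      unfolding na_def nb_def phi_def by auto
  next
    case (Suc k)
    have IH: "3 * Suc k + phi (a k) (b k) (na k) (nb k) \<le> 2 * (\<Sum>y<Suc k. a y + b y)"
      using Suc by simp
    have st: "3 + phi (a (Suc k)) (b (Suc k)) (a (Suc k) > 0 \<and> b (Suc k) = 0 \<and> a k = 0) (b (Suc k) > 0 \<and> a (Suc k) = 0 \<and> b k = 0)
        \<le> phi (a k) (b k) (na k) (nb k) + 2*(a (Suc k) + b (Suc k))"
    proof (rule step)
      show "a k \<le> 2" "b k \<le> 2" "a (Suc k) \<le> 2" "b (Suc k) \<le> 2" using bd Suc.prems by auto
      show "a (Suc k) = 0 \<Longrightarrow> a k = 2" using sa[of "Suc k"] Suc.prems by simp
      show "b (Suc k) = 0 \<Longrightarrow> a (Suc k) + b k \<ge> 2" using sb[of "Suc k"] Suc.prems by simp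
      show "na k \<Longrightarrow> a (Suc k) > 0" using ta[of k] Suc.prems unfolding na_def by auto
      show "nb k \<Longrightarrow> b (Suc k) > 0" using tb[of k] Suc.prems unfolding nb_def by auto
    qed
    have e1: "na (Suc k) = (a (Suc k) > 0 \<and> b (Suc k) = 0 \<and> a k = 0)" unfolding na_def by simp
    have e2: "nb (Suc k) = (b (Suc k) > 0 \<and> a (Suc k) = 0 \<and> b k = 0)" unfolding nb_def by simp
    show ?case using IH st unfolding e1 e2 by simp
  qed
  obtain m where m: "n = Suc m" using n1 by (cases n) auto
  show ?thesis using inv[of m] m by simp
qed

lemma verts_G: "verts (cart_prod (dpath 2) (dpath n)) = {0..<2} \<times> {0..<n}"
  by (simp add: cart_prod_def verts_def dpath_def)

lemma arcs_G: "((x1,y1),(x2,y2)) \<in> arcs (cart_prod (dpath 2) (dpath n)) \<longleftrightarrow>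
   (x1 = 0 \<and> x2 = 1 \<and> y1 = y2 \<and> y1 < n) \<or> (x1 = x2 \<and> x1 < 2 \<and> y2 = Suc y1 \<and> y2 < n)"
  by (auto simp add: cart_prod_def verts_def arcs_def dpath_def)

lemma in_nbrs_0: "y < n \<Longrightarrow> in_nbrs (cart_prod (dpath 2) (dpath n)) (0,y) = (if y = 0 then {} else {(0,y-1)})"
  unfolding in_nbrs_def verts_G by (auto simp: arcs_G)

lemma in_nbrs_1: "y < n \<Longrightarrow> in_nbrs (cart_prod (dpath 2) (dpath n)) (1,y) = insert (0,y) (if y = 0 then {} else {(1,y-1)})"
  unfolding in_nbrs_def verts_G by (auto simp: arcs_G)

lemma sum_G: "rd_weight (cart_prod (dpath 2) (dpath n)) f = (\<Sum>y<n. card (f (0,y)) + card (f (1,y)))"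
proof -
  have "rd_weight (cart_prod (dpath 2) (dpath n)) f = (\<Sum>v\<in>{0..<2} \<times> {0..<n}. card (f v))"
    unfolding rd_weight_def verts_G ..
  also have "\<dots> = (\<Sum>x\<in>{0..<2}. \<Sum>y\<in>{0..<n}. card (f (x,y)))"
    by (simp add: sum.cartesian_product)
  also have "\<dots> = (\<Sum>y<n. card (f (0,y)) + card (f (1,y)))"
    by (simp add: numeral_2_eq_2 sum.distrib atLeast0LessThan)
  finally show ?thesis .
qed

lemma even_count: "(\<Sum>y<n. (if even y then 1 else 0::nat)) = (n+1) div 2"
  by (induction n) auto

lemma upper:
  assumes n2: "n \<ge> 2"
  shows "total_rainbow_dom 2 (cart_prod (dpath 2) (dpath n)) (\<lambda>(x,y). if x = (0::nat) then {1} else if even y then {2} else {})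
     \<and> rd_weight (cart_prod (dpath 2) (dpath n)) (\<lambda>(x,y). if x = (0::nat) then {1} else if even y then {2} else {}) = n + (n+1) div 2"
    (is "total_rainbow_dom 2 ?G ?f \<and> _")
proof
  have vG: "v \<in> verts ?G \<longleftrightarrow> fst v < 2 \<and> snd v < n" for v
    unfolding verts_G by (cases v) auto
  have rd: "rainbow_dom 2 ?G ?f"
    unfolding rainbow_dom_def
  proof (intro conjI ballI impI)
    fix v assume "v \<in> verts ?G" then show "?f v \<subseteq> {1..2}" by (cases v) auto
  next
    fix v assume v: "v \<in> verts ?G" and e: "?f v = {}"
    obtain x y where xy: "v = (x,y)" by (cases v)
    have x1: "x = 1" "odd y" "y < n" using v e xy vG by (auto split: if_splits)
    then have "y \<noteq> 0" using odd_pos by blast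
    have nb: "in_nbrs ?G v = {(0,y),(1,y-1)}" using in_nbrs_1[of y n] x1 xy \<open>y \<noteq> 0\<close> by simp
    have ev: "even (y-1)" using x1 \<open>y \<noteq> 0\<close> by simp
    have "(\<Union>u \<in> in_nbrs ?G v. ?f u) = {1} \<union> {2}" unfolding nb using ev by simp
    also have "\<dots> = {1..2}" by auto
    finally show "(\<Union>u \<in> in_nbrs ?G v. ?f u) = {1..2}" .
  qed
  show "total_rainbow_dom 2 ?G ?f"
    unfolding total_rainbow_dom_def
  proof (intro conjI rd ballI impI)
    fix v assume v: "v \<in> verts ?G" and ne: "?f v \<noteq> {}"
    obtain x y where xy: "v = (x,y)" by (cases v)
    have xy2: "x < 2" "y < n" using v xy vG by auto
    show "\<exists>u\<in>verts ?G. ?f u \<noteq> {} \<and> ((u, v) \<in> arcs ?G \<or> (v, u) \<in> arcs ?G)"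
    proof (cases "x = 0")
      case True
      show ?thesis
      proof (cases "Suc y < n")
        case True
        then show ?thesis using \<open>x = 0\<close> xy by (intro bexI[of _ "(0, Suc y)"]) (simp_all add: arcs_G vG)
      next
        case False
        then have "y \<noteq> 0" using n2 xy2 by auto
        then show ?thesis using \<open>x = 0\<close> xy xy2 by (intro bexI[of _ "(0, y - 1)"]) (simp_all add: arcs_G vG)
      qed
    next
      case False
      then have "x = 1" using xy2 by auto
      then show ?thesis using xy xy2 by (intro bexI[of _ "(0, y)"]) (simp_all add: arcs_G vG)
    qed
  qed
next
  have "rd_weight ?G ?f = (\<Sum>y<n. 1 + (if even y then 1 else 0::nat))"
    unfolding sum_G by (intro sum.cong) auto
  also have "\<dots> = n + (n+1) div 2" by (induction n) auto
  finally show "rd_weight ?G ?f = n + (n+1) div 2" .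
qed

lemma lower:
  assumes n2: "n \<ge> 2" and T: "total_rainbow_dom 2 (cart_prod (dpath 2) (dpath n)) f"
  shows "n + (n+1) div 2 \<le> rd_weight (cart_prod (dpath 2) (dpath n)) f"
proof -
  let ?G = "cart_prod (dpath 2) (dpath n)"
  have vG: "(x,y) \<in> verts ?G \<longleftrightarrow> x < 2 \<and> y < n" for x y
    unfolding verts_G by auto
  have R: "rainbow_dom 2 ?G f" using T unfolding total_rainbow_dom_def by blast
  have sub: "x < 2 \<Longrightarrow> y < n \<Longrightarrow> f (x,y) \<subseteq> {1..2}" for x y
  proof -
    assume "x < 2" "y < n"
    then have "(x,y) \<in> verts ?G" using vG by simp
    then show ?thesis using R unfolding rainbow_dom_def by blast
  qed
  have dom: "x < 2 \<Longrightarrow> y < n \<Longrightarrow> f (x,y) = {} \<Longrightarrow> (\<Union>u \<in> in_nbrs ?G (x,y). f u) = {1..2}" for x y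
  proof -
    assume "x < 2" "y < n" "f (x,y) = {}"
    moreover have "(x,y) \<in> verts ?G" using vG \<open>x < 2\<close> \<open>y < n\<close> by simp
    ultimately show ?thesis using R unfolding rainbow_dom_def by blast
  qed
  have tot: "x < 2 \<Longrightarrow> y < n \<Longrightarrow> f (x,y) \<noteq> {} \<Longrightarrow>
      \<exists>x' y'. x' < 2 \<and> y' < n \<and> f (x',y') \<noteq> {} \<and> (((x',y'),(x,y)) \<in> arcs ?G \<or> ((x,y),(x',y')) \<in> arcs ?G)" for x y
  proof -
    assume "x < 2" "y < n" "f (x,y) \<noteq> {}"
    moreover have "(x,y) \<in> verts ?G" using vG \<open>x < 2\<close> \<open>y < n\<close> by simp
    ultimately obtain u where u1: "u \<in> verts ?G" and u2: "f u \<noteq> {}" and u3: "(u,(x,y)) \<in> arcs ?G \<or> ((x,y),u) \<in> arcs ?G"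
      using T unfolding total_rainbow_dom_def by blast
    obtain x' y' where u: "u = (x',y')" by (cases u)
    have "x' < 2" "y' < n" using u1 u vG by auto
    then show ?thesis using u2 u3 u by blast
  qed
  have c12: "card {1..2::nat} = 2" by simp
  have cle: "x < 2 \<Longrightarrow> y < n \<Longrightarrow> card (f (x,y)) \<le> 2" for x y
    using card_mono[OF _ sub] c12 by (metis finite_atLeastAtMost)
  have fin: "x < 2 \<Longrightarrow> y < n \<Longrightarrow> finite (f (x,y))" for x y
    using sub finite_subset by blast
  have c0: "x < 2 \<Longrightarrow> y < n \<Longrightarrow> card (f (x,y)) = 0 \<longleftrightarrow> f (x,y) = {}" for x y
    using fin by auto
  have full: "x < 2 \<Longrightarrow> y < n \<Longrightarrow> f (x,y) = {1..2} \<Longrightarrow> card (f (x,y)) = 2" for x y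
    by simp
  define a where "a y = card (f (0,y))" for y
  define b where "b y = card (f (1,y))" for y
  have n0: "0 < n" using n2 by simp
  have "3 * n \<le> 2 * (\<Sum>y<n. a y + b y)"
  proof (rule seq_lower)
    show "1 \<le> n" using n2 by simp
    show "\<And>y. y < n \<Longrightarrow> a y \<le> 2 \<and> b y \<le> 2" unfolding a_def b_def using cle by simp
    show "a 0 > 0"
    proof (rule ccontr)
      assume "\<not> a 0 > 0"
      then have "f (0,0) = {}" unfolding a_def using c0[of 0 0] n0 by simp
      then have "(\<Union>u \<in> in_nbrs ?G (0,0). f u) = {1..2}" using dom[of 0 0] n0 by simp
      then show False using in_nbrs_0[of 0 n] n0 by simp
    qed
    show "b 0 = 0 \<Longrightarrow> a 0 = 2"
    proof -
      assume "b 0 = 0"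
      then have "f (1,0) = {}" unfolding b_def using c0[of 1 0] n0 by simp
      then have "(\<Union>u \<in> in_nbrs ?G (1,0). f u) = {1..2}" using dom[of 1 0] n0 by simp
      then have "f (0,0) = {1..2}" using in_nbrs_1[of 0 n] n0 by simp
      then show "a 0 = 2" unfolding a_def by simp
    qed
    show "a (y-1) = 2" if "1 \<le> y" "y < n" "a y = 0" for y
    proof -
      have "f (0,y) = {}" using that c0[of 0 y] unfolding a_def by simp
      then have "(\<Union>u \<in> in_nbrs ?G (0,y). f u) = {1..2}" using dom[of 0 y] that by simp
      then have "f (0,y-1) = {1..2}" using in_nbrs_0[of y n] that by simp
      then show ?thesis unfolding a_def by simp
    qed
    show "a y + b (y-1) \<ge> 2" if "1 \<le> y" "y < n" "b y = 0" for y
    proof -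
      have "f (1,y) = {}" using that c0[of 1 y] unfolding b_def by simp
      then have "(\<Union>u \<in> in_nbrs ?G (1,y). f u) = {1..2}" using dom[of 1 y] that by simp
      then have "f (0,y) \<union> f (1,y-1) = {1..2}" using in_nbrs_1[of y n] that by simp
      then have "card (f (0,y) \<union> f (1,y-1)) = 2" by simp
      moreover have "card (f (0,y) \<union> f (1,y-1)) \<le> card (f (0,y)) + card (f (1,y-1))"
        by (rule card_Un_le)
      ultimately show ?thesis unfolding a_def b_def by simp
    qed
    show "y+1 < n \<and> a (y+1) > 0" if "y < n" "a y > 0" "b y = 0" "y = 0 \<or> a (y-1) = 0" for y
    proof -
      have ne: "f (0,y) \<noteq> {}" using that c0[of 0 y] unfolding a_def by simp
      have e1: "f (1,y) = {}" using that c0[of 1 y] unfolding b_def by simp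
      have e2: "y \<noteq> 0 \<Longrightarrow> f (0,y-1) = {}" using that c0[of 0 "y-1"] unfolding a_def by simp
      obtain x' y' where u: "x' < 2" "y' < n" "f (x',y') \<noteq> {}"
          "((x',y'),(0,y)) \<in> arcs ?G \<or> ((0,y),(x',y')) \<in> arcs ?G"
        using tot[OF _ \<open>y < n\<close> ne] by force
      then have "x' = 0 \<and> y' = Suc y"
        using e1 e2 unfolding arcs_G by auto
      then show ?thesis using u c0[of 0 "y+1"] unfolding a_def by auto
    qed
    show "y+1 < n \<and> b (y+1) > 0" if "y < n" "b y > 0" "a y = 0" "y = 0 \<or> b (y-1) = 0" for y
    proof -
      have ne: "f (1,y) \<noteq> {}" using that c0[of 1 y] unfolding b_def by simp
      have e1: "f (0,y) = {}" using that c0[of 0 y] unfolding a_def by simp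
      have e2: "y \<noteq> 0 \<Longrightarrow> f (1,y-1) = {}" using that c0[of 1 "y-1"] unfolding b_def by simp
      obtain x' y' where u: "x' < 2" "y' < n" "f (x',y') \<noteq> {}"
          "((x',y'),(1,y)) \<in> arcs ?G \<or> ((1,y),(x',y')) \<in> arcs ?G"
        using tot[OF _ \<open>y < n\<close> ne] by force
      then have "x' = 1 \<and> y' = Suc y"
        using e1 e2 unfolding arcs_G by auto
      then show ?thesis using u c0[of 1 "y+1"] unfolding b_def by auto
    qed
  qed
  then have "3 * n \<le> 2 * rd_weight ?G f" unfolding sum_G a_def b_def by simp
  then show ?thesis by linarith
qed

lemma ceil_val: "\<lceil>(3 * real n) / 2\<rceil> = int (n + (n+1) div 2)"
proof (rule ceiling_unique)
  obtain k where "n = 2*k \<or> n = 2*k+1" by (metis oddE evenE)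
  then show "real_of_int (int (n + (n+1) div 2)) - 1 < 3 * real n / 2"
       and "3 * real n / 2 \<le> real_of_int (int (n + (n+1) div 2))"
    by (auto simp: field_simps)
qed

theorem proposition4p3:
  fixes n :: nat
  assumes "n \<ge> 2"
  shows "int (gamma_trk 2 (cart_prod (dpath 2) (dpath n))) = \<lceil>(3 * real n) / 2\<rceil>"
proof -
  have "gamma_trk 2 (cart_prod (dpath 2) (dpath n)) = n + (n+1) div 2"
    unfolding gamma_trk_def
  proof (rule Least_equality)
    show "\<exists>f. total_rainbow_dom 2 (cart_prod (dpath 2) (dpath n)) f \<and> rd_weight (cart_prod (dpath 2) (dpath n)) f = n + (n + 1) div 2"
      using upper[OF assms] by blast
    show "\<And>w. \<exists>f. total_rainbow_dom 2 (cart_prod (dpath 2) (dpath n)) f \<and> rd_weight (cart_prod (dpath 2) (dpath n)) f = w \<Longrightarrow> n + (n + 1) div 2 \<le> w"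
      using lower[OF assms] by blast
  qed
  then show ?thesis using ceil_val by simp
qed

end
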